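(* Let $R\in\mathbb R$ and let $f:[0,R)\to\mathbb R$ be continuously differentiable and satisfy (h1) $f(0)>0$, $f'(0)=-1$; (h2) $f'$ is strictly increasing and convex; (h3) $f(t)<0$ for some $t\in(0,R)$. Let $e_f(v,t):=f(v)-[f(t)+f'(t)(v-t)]$ for $t,v\in[0,R)$. If $0\le b\le t$, $0\le a\le s$ and $t+s<R$, then \[e_f(a+b,b)\le e_f(t+s,t),\] and, if $s\neq0$, \[e_f(a+b,b)\le\frac12\,\frac{f'(t+s)-f'(t)}{s}\,a^2.\] *)

theory Defs
  imports "HOL-Analysis.Analysis"
begin

definition lin_err :: "(real \<Rightarrow> real) \<Rightarrow> (real \<Rightarrow> real) \<Rightarrow> real \<Rightarrow> real \<Rightarrow> real" where
  "lin_err f f' v t = f v - (f t + f' t * (v - t))"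

end

theory Submission
  imports Defs
begin

lemma slope_swap: "((u::real) - v)/(w - z) = (v - u)/(z - w)"
  by (metis minus_diff_eq minus_divide_divide)

lemma slope_mono:
  fixes g :: "real \<Rightarrow> real"
  assumes cv: "convex_on I g" and I: "p \<in> I" "q' \<in> I" "p' \<in> I" "q \<in> I"
    and lt: "p < q" "p' < q'" "p \<le> p'" "q \<le> q'"
  shows "(g q - g p)/(q-p) \<le> (g q' - g p')/(q'-p')"
proof -
  have 1: "(g q - g p)/(q-p) \<le> (g q' - g p)/(q'-p)"
  proof (cases "q = q'")
    case False
    then have "q < q'" using lt by simp
    from convex_on_slope_le(1)[OF cv I(1) I(2) lt(1) this] show ?thesis
      by (simp add: slope_swap)
  qed simp
  have 2: "(g q' - g p)/(q'-p) \<le> (g q' - g p')/(q'-p')"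
  proof (cases "p = p'")
    case False
    then have "p < p'" using lt by simp
    from convex_on_slope_le(2)[OF cv I(1) I(2) this lt(2)] show ?thesis
      by (simp add: slope_swap)
  qed simp
  from 1 2 show ?thesis by linarith
qed

theorem lemma3p3:
  fixes f f' :: "real \<Rightarrow> real" and R a b s t :: real
  assumes deriv: "\<And>x. x \<in> {0..<R} \<Longrightarrow> (f has_real_derivative f' x) (at x within {0..<R})"
    and cont: "continuous_on {0..<R} f'"
    and h1: "f 0 > 0" "f' 0 = -1"
    and h2: "strict_mono_on {0..<R} f'" "convex_on {0..<R} f'"
    and h3: "\<exists>x\<in>{0<..<R}. f x < 0"
    and b: "0 \<le> b" "b \<le> t"
    and a: "0 \<le> a" "a \<le> s"
    and ts: "t + s < R"
  shows "lin_err f f' (a + b) b \<le> lin_err f f' (t + s) t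
         \<and> (s \<noteq> 0 \<longrightarrow> lin_err f f' (a + b) b \<le> (1/2) * ((f' (t + s) - f' t) / s) * a\<^sup>2)"
proof -
  define D where "D = {0..<R}"
  have mono: "f' x \<le> f' y" if "x \<in> D" "y \<in> D" "x \<le> y" for x y
    using h2(1) that unfolding D_def
    by (metis order_le_less strict_mono_onD)
  have dint: "(f has_real_derivative f' x) (at x)" if "0 < x" "x < R" for x
  proof -
    have "at x within {0..<R} = at x"
      by (rule at_within_interior) (use that in auto)
    with deriv[of x] that show ?thesis by auto
  qed
  have fcont: "continuous_on D f"
    unfolding D_def continuous_on_eq_continuous_within
    using deriv DERIV_continuous by blast
  define k where "k c x = f (c + x) - f c - f' c * x" for c x
  have le: "lin_err f f' (c + x) c = k c x" for c x
    unfolding lin_err_def k_def by simp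
  have kder: "(k c has_real_derivative (f' (c + x) - f' c)) (at x)"
    if "0 < c + x" "c + x < R" for c x
  proof -
    have "((\<lambda>x. f (c + x)) has_real_derivative f' (c + x) * 1) (at x)"
      by (rule DERIV_chain2[where g="\<lambda>x. c + x", OF dint[OF that]]) (auto intro!: derivative_eq_intros)
    then show ?thesis unfolding k_def
      by (auto intro!: derivative_eq_intros)
  qed
  have kcont: "continuous_on {0..s} (k c)" if "0 \<le> c" "c \<le> t" for c
  proof -
    have "continuous_on {0..s} (\<lambda>x. f (c + x))"
      by (rule continuous_on_compose2[OF fcont]) (use that ts in \<open>auto simp: D_def intro!: continuous_intros\<close>)
    then show ?thesis unfolding k_def by (auto intro!: continuous_intros)
  qed
  have inD: "c + x \<in> D" if "0 \<le> c" "c \<le> t" "0 \<le> x" "x \<le> s" for c x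
    using that ts by (auto simp: D_def)
  have cvx: "convex_on D f'" using h2(2) by (simp add: D_def)
  have A: "k b a \<le> k b s"
  proof (rule DERIV_nonneg_imp_increasing_open[OF a(2)])
    fix x assume x: "a < x" "x < s"
    show "\<exists>y. (k b has_real_derivative y) (at x) \<and> 0 \<le> y"
      using kder[of b x] x a b ts mono[of b "b+x"] inD[of b 0] inD[of b x] by auto
  next
    show "continuous_on {a..s} (k b)"
      using continuous_on_subset[OF kcont[OF b], of "{a..s}"] a by auto
  qed
  have B: "k b s \<le> k t s"
  proof -
    have "k t 0 - k b 0 \<le> k t s - k b s"
    proof (rule DERIV_nonneg_imp_increasing_open[where f="\<lambda>x. k t x - k b x"])
      show "0 \<le> s" using a by simp
    next
      fix x assume x: "0 < x" "x < s"
      have sl: "(f' (b + x) - f' b) / ((b + x) - b) \<le> (f' (t + x) - f' t) / ((t + x) - t)"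
        by (rule slope_mono[OF cvx]) (use inD[of b 0] inD[of t 0] inD[of b x] inD[of t x] x b a in auto)
      then have "f' (b + x) - f' b \<le> f' (t + x) - f' t"
        using x by (simp add: divide_le_cancel)
      moreover have "((\<lambda>x. k t x - k b x) has_real_derivative
          ((f' (t + x) - f' t) - (f' (b + x) - f' b))) (at x)"
        by (intro DERIV_diff kder) (use x b ts a in auto)
      ultimately show "\<exists>y. ((\<lambda>x. k t x - k b x) has_real_derivative y) (at x) \<and> 0 \<le> y"
        by auto
    next
      show "continuous_on {0..s} (\<lambda>x. k t x - k b x)"
        using kcont[of t] kcont[OF b] b by (auto intro!: continuous_intros)
    qed
    then show ?thesis by (simp add: k_def)
  qed
  have C: "k b a \<le> (1/2) * ((f' (t + s) - f' t) / s) * a\<^sup>2" if s0: "s \<noteq> 0"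
  proof -
    define K where "K = (f' (t + s) - f' t) / s"
    have spos: "0 < s" using s0 a by simp
    have "K/2 * 0\<^sup>2 - k b 0 \<le> K/2 * a\<^sup>2 - k b a"
    proof (rule DERIV_nonneg_imp_increasing_open[where f="\<lambda>x. K/2 * x\<^sup>2 - k b x"])
      show "0 \<le> a" using a by simp
    next
      fix x assume x: "0 < x" "x < a"
      have sl: "(f' (b + x) - f' b) / ((b + x) - b) \<le> (f' (t + s) - f' t) / ((t + s) - t)"
        by (rule slope_mono[OF cvx]) (use inD[of b 0] inD[of t 0] inD[of b x] inD[of t s] x b a in auto)
      then have "f' (b + x) - f' b \<le> K * x"
        using x unfolding K_def by (simp add: divide_le_eq mult.commute)
      moreover have "((\<lambda>x. K/2 * x\<^sup>2 - k b x) has_real_derivative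
          (K/2 * (2 * x) - (f' (b + x) - f' b))) (at x)"
        by (rule derivative_eq_intros kder refl)+ (use x b a ts in auto)
      ultimately show "\<exists>y. ((\<lambda>x. K/2 * x\<^sup>2 - k b x) has_real_derivative y) (at x) \<and> 0 \<le> y"
        by auto
    next
      show "continuous_on {0..a} (\<lambda>x. K/2 * x\<^sup>2 - k b x)"
        using kcont[OF b] a by (auto intro!: continuous_intros elim: continuous_on_subset)
    qed
    then show ?thesis by (simp add: k_def K_def)
  qed
  show ?thesis
    using A B C by (simp add: le[symmetric] add.commute)
qed

end
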